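(* Let $\lambda$ be a nonzero real number. For all integers $m,n\ge 0$, $$\binom{n+m}{n}H_{n+m,\lambda}=\sum_{l=0}^{n}H_{l,\lambda}\binom{m+n-l-1}{n-l}+H_{m,\lambda}\binom{m+n-\lambda}{n},$$ where $H_{j,\lambda}$ denotes the $j$-th degenerate harmonic number.
   Context: For nonzero real $\lambda$, the degenerate harmonic numbers are defined by $H_{0,\lambda}=0$ and, for $j\ge 1$, $$H_{j,\lambda}=\frac{1}{\lambda}\sum_{k=1}^{j}\binom{\lambda}{k}(-1)^{k-1}=\sum_{k=1}^{j}\binom{\lambda-1}{k-1}\frac{(-1)^{k-1}}{k}.$$ Equivalently, $\frac{1}{1-t}\log_{-\lambda}\!\left(\frac{1}{1-t}\right)=\sum_{j\ge1}H_{j,\lambda}t^j$, where $\log_{\mu}(t)=\frac{1}{\mu}(t^{\mu}-1)$. Binomial coefficients are the generalized ones: for any real $a$ and integer $j\ge 0$, $\binom{a}{j}=\frac{a(a-1)\cdots(a-j+1)}{j!}$, with $\binom{a}{0}=1$; in particular $\binom{-1}{0}=1$. *)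

theory Defs
  imports Complex_Main
begin

definition deg_harm :: "nat \<Rightarrow> real \<Rightarrow> real" where
  "deg_harm j lam = (1 / lam) * (\<Sum>k=1..j. (lam gchoose k) * (-1) ^ (k - 1))"

end

theory Submission
  imports Defs "HOL-Computational_Algebra.Formal_Power_Series"
begin

definition cc :: "real \<Rightarrow> nat \<Rightarrow> real" where
  "cc L j = (-1) ^ j * ((L - 1) gchoose j)"

lemma closed_form:
  assumes "L \<noteq> 0"
  shows "deg_harm j L = (1 - cc L j) / L"
proof (induction j)
  case 0
  then show ?case by (simp add: deg_harm_def cc_def)
next
  case (Suc j)
  have s: "(\<Sum>k=1..Suc j. (L gchoose k) * (-1) ^ (k - 1))
      = (\<Sum>k=1..j. (L gchoose k) * (-1) ^ (k - 1)) + (L gchoose Suc j) * (-1) ^ j"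
    by simp
  have p: "L gchoose Suc j = ((L - 1) gchoose j) + ((L - 1) gchoose Suc j)"
    using gbinomial_Suc_Suc[of "L - 1" j] by simp
  have "deg_harm (Suc j) L = deg_harm j L + (1/L) * ((L gchoose Suc j) * (-1) ^ j)"
    unfolding deg_harm_def s by (simp add: algebra_simps)
  also have "\<dots> = (1 - cc L (Suc j)) / L"
    using Suc assms unfolding p cc_def by (simp add: field_simps)
  finally show ?case .
qed

lemma V:
  fixes L :: real and m n :: nat
  shows "(\<Sum>l=0..n. cc L l * ((real m + real n - real l - 1) gchoose (n - l)))
         = (real m + real n - L) gchoose n"
proof -
  have "(\<Sum>l=0..n. cc L l * ((real m + real n - real l - 1) gchoose (n - l)))
      = (\<Sum>l=0..n. (-1) ^ n * (((L - 1) gchoose l) * ((- real m) gchoose (n - l))))"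
  proof (rule sum.cong)
    fix l assume "l \<in> {0..n}"
    then have ln: "l \<le> n" by simp
    have e: "(real m + real n - real l - 1) gchoose (n - l)
        = (-1) ^ (n - l) * ((- real m) gchoose (n - l))"
      using gbinomial_negated_upper[of "real m + real n - real l - 1" "n - l"] ln
      by (simp add: of_nat_diff)
    have sg: "(-1::real) ^ l * (-1) ^ (n - l) = (-1) ^ n"
      using ln by (metis le_add_diff_inverse power_add)
    show "cc L l * ((real m + real n - real l - 1) gchoose (n - l))
        = (-1) ^ n * (((L - 1) gchoose l) * ((- real m) gchoose (n - l)))"
      unfolding cc_def e using sg by (metis (no_types, lifting) mult.assoc mult.left_commute)
  qed (simp)
  also have "\<dots> = (-1) ^ n * ((L - 1 - real m) gchoose n)"
    using gbinomial_Vandermonde[of "L - 1" "- real m" n]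
    by (simp add: sum_distrib_left[symmetric])
  also have "\<dots> = (real m + real n - L) gchoose n"
    using gbinomial_negated_upper[of "L - 1 - real m" n] by (simp add: algebra_simps)
  finally show ?thesis .
qed

lemma P:
  fixes m n :: nat
  shows "(\<Sum>l=0..n. ((real m + real n - real l - 1) gchoose (n - l)))
         = (real (n + m) gchoose n)"
proof -
  have "(\<Sum>l=0..n. ((real m + real n - real l - 1) gchoose (n - l)))
      = (\<Sum>k=0..n. ((real m + real n - real (n - k) - 1) gchoose (n - (n - k))))"
    using sum.atLeastAtMost_rev[of "\<lambda>l. (real m + real n - real l - 1) gchoose (n - l)" 0 n]
    by simp
  also have "\<dots> = (\<Sum>k\<le>n. ((real m - 1 + real k) gchoose k))"
    by (intro sum.cong) (auto simp: of_nat_diff algebra_simps)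
  also have "\<dots> = real (n + m) gchoose n"
    using gbinomial_parallel_sum[of "real m - 1" n] by (simp add: algebra_simps)
  finally show ?thesis .
qed

lemma T:
  fixes L :: real and m n :: nat
  shows "(real (n + m) gchoose n) * cc L (n + m) = cc L m * ((real m + real n - L) gchoose n)"
proof -
  have sym: "real (n + m) gchoose n = real (n + m) gchoose m"
    by (metis binomial_gbinomial binomial_symmetric le_add2 add_diff_cancel_right' of_nat_add)
  have tr: "((L - 1) gchoose (n + m)) * (real (n + m) gchoose m)
      = ((L - 1) gchoose m) * ((L - 1 - real m) gchoose n)"
    using gbinomial_trinomial_revision[of m "n + m" "L - 1"] by simp
  have ng: "(real m + real n - L) gchoose n = (-1) ^ n * ((L - 1 - real m) gchoose n)"
    using gbinomial_negated_upper[of "real m + real n - L" n] by (simp add: algebra_simps)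
  show ?thesis
    unfolding cc_def ng sym using tr by (simp add: power_add algebra_simps)
qed

theorem theorem2p3:
  fixes lam :: real and m n :: nat
  assumes "lam \<noteq> 0"
  shows "(real (n + m) gchoose n) * deg_harm (n + m) lam =
    (\<Sum>l=0..n. deg_harm l lam * ((real m + real n - real l - 1) gchoose (n - l)))
    + deg_harm m lam * ((real m + real n - lam) gchoose n)"
proof -
  let ?B = "\<lambda>l. (real m + real n - real l - 1) gchoose (n - l)"
  let ?G = "(real m + real n - lam) gchoose n"
  have "(\<Sum>l=0..n. deg_harm l lam * ?B l) = (\<Sum>l=0..n. (?B l - cc lam l * ?B l) / lam)"
    by (intro sum.cong) (simp_all add: closed_form[OF assms] algebra_simps diff_divide_distrib)
  also have "\<dots> = ((real (n + m) gchoose n) - ?G) / lam"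
    using V[of lam m n] P[of m n]
    by (simp add: sum_divide_distrib[symmetric] sum_subtractf)
  finally have S: "(\<Sum>l=0..n. deg_harm l lam * ?B l) = ((real (n + m) gchoose n) - ?G) / lam" .
  show ?thesis
    unfolding S unfolding closed_form[OF assms] using T[of n m lam] assms
    by (simp add: field_simps)
qed

end
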